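(* Let $({\rm X},{\sf d},{\mbox{m}})$ be an $\mathrm{RCD}(K,N)$ space, $({\rm Y},{\sf d}_{\rm Y},\bar y)$ a pointed ${\sf CAT}(0)$ space, $\Omega\subset{\rm X}$ open, $\bar u\in{\sf KS}^{1,2}(\Omega,{\rm Y}_{\bar y})$ and $u\in L^2(\Omega,{\rm Y}_{\bar y})$, and let $(u_t)_{t\ge0}$ (with $u_0=u$) be the gradient flow trajectory of ${\sf E}^{\sf KS}_{\bar u}$ in $L^2(\Omega,{\rm Y}_{\bar y})$ starting from $u$. Then there is a separable subset $\tilde{\rm Y}\subset{\rm Y}$ which is a ${\sf CAT}(0)$ space with the induced metric and such that ${\mbox{m}}(u_t^{-1}({\rm Y}\setminus\tilde{\rm Y}))=0$ for every $t\ge0$. The same holds with ${\sf E}^{\sf KS}$ in place of ${\sf E}^{\sf KS}_{\bar u}$.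
   Context: $\mathrm{RCD}(K,N)$ spaces ($K\in\mathbb{R}$, $N\in[1,\infty)$) are the standard class of metric measure spaces with Riemannian Ricci curvature bounded below by $K$ and dimension above by $N$; $W^{1,2}(\Omega),W^{1,2}_0(\Omega)$ the usual Sobolev spaces. ${\sf CAT}(0)$: complete geodesic metric space with ${\sf d}^2(\gamma_t,a)\le(1-t){\sf d}^2(\gamma_0,a)+t{\sf d}^2(\gamma_1,a)-t(1-t){\sf d}^2(\gamma_0,\gamma_1)$ along constant speed geodesics. $L^2(\Omega,{\rm Y}_{\bar y})$: Borel essentially separably valued maps with $\int_\Omega{\sf d}^2_{\rm Y}(u,\bar y)\,{\rm d}{\mbox{m}}<\infty$ mod a.e. equality, with distance ${\sf d}_{L^2}^2(u,v)=\int_\Omega{\sf d}^2_{\rm Y}(u,v)\,{\rm d}{\mbox{m}}$ (a ${\sf CAT}(0)$ space). Korevaar–Schoen energy: ${\sf ks}_{2,r}[u,\Omega](x):=\big(\frac1{{\mbox{m}}(B_r(x))}\int_{B_r(x)}\frac{{\sf d}^2_{\rm Y}(u(x),u(\tilde x))}{r^2}{\rm d}{\mbox{m}}(\tilde x)\big)^{1/2}$ if $B_r(x)\subset\Omega$, $0$ otherwise; ${\sf E}^{\sf KS}(u):=\limsup_{r\downarrow0}\frac12\int_\Omega{\sf ks}^2_{2,r}[u,\Omega]\,{\rm d}{\mbox{m}}$; ${\sf KS}^{1,2}$ the finite energy maps; ${\sf E}^{\sf KS}_{\bar u}(u):={\sf E}^{\sf KS}(u)$ if $u\in{\sf KS}^{1,2}$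 and ${\sf d}_{\rm Y}(u,\bar u)\in W^{1,2}_0(\Omega)$, $+\infty$ otherwise; both are convex and lower semicontinuous on $L^2(\Omega,{\rm Y}_{\bar y})$. Gradient flow trajectory of a convex lsc ${\sf E}$ on a ${\sf CAT}(0)$ space starting at $u\in\overline{D({\sf E})}$: locally absolutely continuous $t\mapsto u_t$ with $u_t\to u$ as $t\downarrow0$ and $\frac{{\rm d}}{{\rm d}t}\frac{{\sf d}^2(u_t,w)}2+{\sf E}(u_t)\le{\sf E}(w)$ for a.e. $t>0$ and all $w$ (it exists and is unique). *)

theory Defs
  imports "HOL-Probability.Probability"
begin

section \<open>CAT(0) spaces (a subset S of a metric space with the induced metric)\<close>

definition geodesic_in :: "'b::metric_space set \<Rightarrow> (real \<Rightarrow> 'b) \<Rightarrow> 'b \<Rightarrow> 'b \<Rightarrow> bool" where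
  "geodesic_in S \<gamma> x y \<longleftrightarrow> \<gamma> 0 = x \<and> \<gamma> 1 = y \<and> (\<forall>t\<in>{0..1}. \<gamma> t \<in> S) \<and>
     (\<forall>s\<in>{0..1}. \<forall>t\<in>{0..1}. dist (\<gamma> s) (\<gamma> t) = \<bar>s - t\<bar> * dist x y)"

definition CAT0 :: "'b::metric_space set \<Rightarrow> bool" where
  "CAT0 S \<longleftrightarrow>
     (\<forall>f. (\<forall>n. f n \<in> S) \<and> Cauchy f \<longrightarrow> (\<exists>l\<in>S. f \<longlonglongrightarrow> l)) \<and>
     (\<forall>x\<in>S. \<forall>y\<in>S. \<exists>\<gamma>. geodesic_in S \<gamma> x y) \<and>
     (\<forall>\<gamma> x y a. geodesic_in S \<gamma> x y \<and> a \<in> S \<longrightarrow>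
        (\<forall>t\<in>{0..1}. (dist (\<gamma> t) a)\<^sup>2 \<le> (1 - t) * (dist x a)\<^sup>2 + t * (dist y a)\<^sup>2
                                      - t * (1 - t) * (dist x y)\<^sup>2))"

definition separable_set :: "'b::metric_space set \<Rightarrow> bool" where
  "separable_set S \<longleftrightarrow> (\<exists>C. countable C \<and> C \<subseteq> S \<and> S \<subseteq> closure C)"

definition P2 :: "'a::metric_space measure set" where
  "P2 = {\<mu>. prob_space \<mu> \<and> sets \<mu> = sets borel \<and>
           (\<exists>x0. (\<integral>\<^sup>+x. ennreal ((dist x x0)\<^sup>2) \<partial>\<mu>) < \<infinity>)}"

definition couplings :: "'a::metric_space measure \<Rightarrow> 'a measure \<Rightarrow> ('a \<times> 'a) measure set" where
  "couplings \<mu> \<nu> = {q. prob_space q \<and> sets q = sets (borel :: ('a \<times> 'a) measure) \<and>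
                       distr q borel fst = \<mu> \<and> distr q borel snd = \<nu>}"

definition transport_cost :: "('a::metric_space \<times> 'a) measure \<Rightarrow> ennreal" where
  "transport_cost q = (\<integral>\<^sup>+p. ennreal ((dist (fst p) (snd p))\<^sup>2) \<partial>q)"

definition W2sq :: "'a::metric_space measure \<Rightarrow> 'a measure \<Rightarrow> ennreal" where
  "W2sq \<mu> \<nu> = (INF q\<in>couplings \<mu> \<nu>. transport_cost q)"

definition optimal_coupling :: "'a::metric_space measure \<Rightarrow> 'a measure \<Rightarrow> ('a \<times> 'a) measure \<Rightarrow> bool" where
  "optimal_coupling \<mu> \<nu> q \<longleftrightarrow> q \<in> couplings \<mu> \<nu> \<and> transport_cost q = W2sq \<mu> \<nu>"

definition W2_geodesic :: "(real \<Rightarrow> 'a::metric_space measure) \<Rightarrow> 'a measure \<Rightarrow> 'a measure \<Rightarrow> bool" where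
  "W2_geodesic \<Gamma> \<mu>0 \<mu>1 \<longleftrightarrow> \<Gamma> 0 = \<mu>0 \<and> \<Gamma> 1 = \<mu>1 \<and> (\<forall>t\<in>{0..1}. \<Gamma> t \<in> P2) \<and>
     (\<forall>s\<in>{0..1}. \<forall>t\<in>{0..1}. W2sq (\<Gamma> s) (\<Gamma> t) = ennreal ((s - t)\<^sup>2) * W2sq \<mu>0 \<mu>1)"

definition sigma_coeff :: "real \<Rightarrow> real \<Rightarrow> real \<Rightarrow> real \<Rightarrow> ennreal" where
  "sigma_coeff K N t \<theta> =
     (if K * \<theta>\<^sup>2 \<ge> N * pi\<^sup>2 then \<infinity>
      else if K * \<theta>\<^sup>2 > 0 then ennreal (sin (t * \<theta> * sqrt (K / N)) / sin (\<theta> * sqrt (K / N)))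
      else if K * \<theta>\<^sup>2 = 0 then ennreal t
      else ennreal (sinh (t * \<theta> * sqrt (- K / N)) / sinh (\<theta> * sqrt (- K / N))))"

definition tau_coeff :: "real \<Rightarrow> real \<Rightarrow> real \<Rightarrow> real \<Rightarrow> ennreal" where
  "tau_coeff K N t \<theta> =
     (if N = 1 then (if K > 0 then \<infinity> else ennreal t)
      else if sigma_coeff K (N - 1) t \<theta> = \<infinity> then \<infinity>
      else ennreal (t powr (1 / N) * (enn2real (sigma_coeff K (N - 1) t \<theta>)) powr (1 - 1 / N)))"

definition ac_bounded :: "'a::metric_space measure \<Rightarrow> 'a measure \<Rightarrow> ('a \<Rightarrow> real) \<Rightarrow> bool" where
  "ac_bounded M \<mu> \<rho> \<longleftrightarrow> \<mu> \<in> P2 \<and> \<rho> \<in> borel_measurable M \<and> (\<forall>x. 0 \<le> \<rho> x) \<and>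
     \<mu> = density M (\<lambda>x. ennreal (\<rho> x)) \<and> (\<exists>x0 r. emeasure \<mu> (UNIV - cball x0 r) = 0)"

text \<open>The curvature-dimension condition CD(K,N) in the sense of Sturm / Lott--Villani:
  the Renyi entropy S_N'(mu|m) = - integral of rho^(1-1/N') (rho the density of the absolutely
  continuous part of mu) satisfies the tau-distorted convexity inequality along some
  W2-geodesic induced by some optimal coupling.\<close>
definition CD :: "real \<Rightarrow> real \<Rightarrow> 'a::metric_space measure \<Rightarrow> bool" where
  "CD K N M \<longleftrightarrow>
    (\<forall>\<mu>0 \<mu>1 \<rho>0 \<rho>1. ac_bounded M \<mu>0 \<rho>0 \<and> ac_bounded M \<mu>1 \<rho>1 \<longrightarrow>
      (\<exists>q \<Gamma>. optimal_coupling \<mu>0 \<mu>1 q \<and> W2_geodesic \<Gamma> \<mu>0 \<mu>1 \<and>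
        (\<forall>t\<in>{0<..<1}. \<forall>N'\<ge>N. \<exists>\<rho>t Z.
           \<rho>t \<in> borel_measurable M \<and> (\<forall>x. 0 \<le> \<rho>t x) \<and> Z \<in> null_sets M \<and>
           (\<forall>A\<in>sets M. emeasure (\<Gamma> t) (A - Z) = (\<integral>\<^sup>+x\<in>A. ennreal (\<rho>t x) \<partial>M)) \<and>
           (\<integral>\<^sup>+p. tau_coeff K N' (1 - t) (dist (fst p) (snd p)) * ennreal (\<rho>0 (fst p) powr (- 1 / N'))
                 + tau_coeff K N' t (dist (fst p) (snd p)) * ennreal (\<rho>1 (snd p) powr (- 1 / N')) \<partial>q)
             \<le> (\<integral>\<^sup>+x. ennreal (\<rho>t x powr (1 - 1 / N')) \<partial>M))))"

definition lipschitz_fun :: "('a::metric_space \<Rightarrow> real) \<Rightarrow> bool" where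
  "lipschitz_fun f \<longleftrightarrow> (\<exists>L. \<forall>x y. \<bar>f x - f y\<bar> \<le> L * dist x y)"

text \<open>Local Lipschitz constant (slope); it is 0 at isolated points.\<close>
definition lip :: "('a::metric_space \<Rightarrow> real) \<Rightarrow> 'a \<Rightarrow> ennreal" where
  "lip f x = Limsup (at x) (\<lambda>y. ennreal (\<bar>f y - f x\<bar> / dist y x))"

definition L2fun :: "'a::metric_space measure \<Rightarrow> ('a \<Rightarrow> real) set" where
  "L2fun M = {f. f \<in> borel_measurable M \<and> (\<integral>\<^sup>+x. ennreal ((f x)\<^sup>2) \<partial>M) < \<infinity>}"

definition L2_to :: "'a::metric_space measure \<Rightarrow> (nat \<Rightarrow> 'a \<Rightarrow> real) \<Rightarrow> ('a \<Rightarrow> real) \<Rightarrow> bool" where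
  "L2_to M F f \<longleftrightarrow> ((\<lambda>n. \<integral>\<^sup>+x. ennreal ((F n x - f x)\<^sup>2) \<partial>M) \<longlonglongrightarrow> 0)"

definition Cheeger :: "'a::metric_space measure \<Rightarrow> ('a \<Rightarrow> real) \<Rightarrow> ennreal" where
  "Cheeger M f = (INF F\<in>{F. (\<forall>n. lipschitz_fun (F n) \<and> F n \<in> L2fun M) \<and> L2_to M F f}.
                    liminf (\<lambda>n. (\<integral>\<^sup>+x. (lip (F n) x)\<^sup>2 \<partial>M) / 2))"

definition inf_hilbertian :: "'a::metric_space measure \<Rightarrow> bool" where
  "inf_hilbertian M \<longleftrightarrow> (\<forall>f\<in>L2fun M. \<forall>g\<in>L2fun M.
     Cheeger M (\<lambda>x. f x + g x) + Cheeger M (\<lambda>x. f x - g x) = 2 * Cheeger M f + 2 * Cheeger M g)"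

text \<open>RCD(K,N) space: complete separable metric space (type class polish_space) with a Borel
  measure finite and positive on balls (full support), satisfying CD(K,N) and infinitesimally
  Hilbertian.\<close>
definition RCD :: "real \<Rightarrow> real \<Rightarrow> 'a::polish_space measure \<Rightarrow> bool" where
  "RCD K N M \<longleftrightarrow> 1 \<le> N \<and> sets M = sets borel \<and>
     (\<forall>x r. r > 0 \<longrightarrow> 0 < emeasure M (ball x r) \<and> emeasure M (ball x r) < \<infinity>) \<and>
     CD K N M \<and> inf_hilbertian M"

text \<open>W^{1,2}_0(Omega): functions on Omega whose extension by 0 lies in the W^{1,2}(X)-closure of
  Lipschitz functions with compact support contained in Omega.\<close>
definition W120 :: "'a::metric_space measure \<Rightarrow> 'a set \<Rightarrow> ('a \<Rightarrow> real) \<Rightarrow> bool" where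
  "W120 M \<Omega> g \<longleftrightarrow> (\<exists>f h. f \<in> L2fun M \<and> Cheeger M f < \<infinity> \<and>
      (AE x in M. x \<in> \<Omega> \<longrightarrow> f x = g x) \<and> (AE x in M. x \<notin> \<Omega> \<longrightarrow> f x = 0) \<and>
      (\<forall>n. lipschitz_fun (h n) \<and> compact (closure {x. h n x \<noteq> 0}) \<and> closure {x. h n x \<noteq> 0} \<subseteq> \<Omega>) \<and>
      L2_to M h f \<and> ((\<lambda>n. Cheeger M (\<lambda>x. h n x - f x)) \<longlonglongrightarrow> 0))"

definition L2Y :: "'a::metric_space measure \<Rightarrow> 'a set \<Rightarrow> 'b::metric_space \<Rightarrow> ('a \<Rightarrow> 'b) set" where
  "L2Y M \<Omega> ybar = {u. u \<in> borel_measurable (restrict_space M \<Omega>) \<and>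
       (\<exists>Z\<in>null_sets M. separable_set (u ` (\<Omega> - Z))) \<and>
       (\<integral>\<^sup>+x\<in>\<Omega>. ennreal ((dist (u x) ybar)\<^sup>2) \<partial>M) < \<infinity>}"

definition dL2 :: "'a::metric_space measure \<Rightarrow> 'a set \<Rightarrow> ('a \<Rightarrow> 'b::metric_space) \<Rightarrow> ('a \<Rightarrow> 'b) \<Rightarrow> real" where
  "dL2 M \<Omega> u v = sqrt (enn2real (\<integral>\<^sup>+x\<in>\<Omega>. ennreal ((dist (u x) (v x))\<^sup>2) \<partial>M))"

definition ks2 :: "'a::metric_space measure \<Rightarrow> 'a set \<Rightarrow> ('a \<Rightarrow> 'b::metric_space) \<Rightarrow> real \<Rightarrow> 'a \<Rightarrow> ennreal" where
  "ks2 M \<Omega> u r x = (if ball x r \<subseteq> \<Omega>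
      then (\<integral>\<^sup>+y\<in>ball x r. ennreal ((dist (u x) (u y))\<^sup>2 / r\<^sup>2) \<partial>M) / emeasure M (ball x r)
      else 0)"

definition E_KS :: "'a::metric_space measure \<Rightarrow> 'a set \<Rightarrow> ('a \<Rightarrow> 'b::metric_space) \<Rightarrow> ennreal" where
  "E_KS M \<Omega> u = Limsup (at_right 0) (\<lambda>r. (\<integral>\<^sup>+x\<in>\<Omega>. ks2 M \<Omega> u r x \<partial>M) / 2)"

definition KS12 :: "'a::metric_space measure \<Rightarrow> 'a set \<Rightarrow> 'b::metric_space \<Rightarrow> ('a \<Rightarrow> 'b) set" where
  "KS12 M \<Omega> ybar = {u \<in> L2Y M \<Omega> ybar. E_KS M \<Omega> u < \<infinity>}"

definition E_KS_bc :: "'a::metric_space measure \<Rightarrow> 'a set \<Rightarrow> 'b::metric_space \<Rightarrow> ('a \<Rightarrow> 'b) \<Rightarrow> ('a \<Rightarrow> 'b) \<Rightarrow> ennreal" where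
  "E_KS_bc M \<Omega> ybar ubar u =
     (if u \<in> KS12 M \<Omega> ybar \<and> W120 M \<Omega> (\<lambda>x. dist (u x) (ubar x)) then E_KS M \<Omega> u else \<infinity>)"

section \<open>Gradient flow trajectories (EVI formulation) on a (pseudo)metric set\<close>

definition loc_abs_cont :: "('c \<Rightarrow> 'c \<Rightarrow> real) \<Rightarrow> (real \<Rightarrow> 'c) \<Rightarrow> bool" where
  "loc_abs_cont d U \<longleftrightarrow> (\<forall>a b. 0 < a \<and> a < b \<longrightarrow>
     (\<exists>g. (\<forall>s. 0 \<le> g s) \<and> g integrable_on {a..b} \<and>
          (\<forall>s t. a \<le> s \<and> s \<le> t \<and> t \<le> b \<longrightarrow> d (U s) (U t) \<le> integral {s..t} g)))"

definition grad_flow :: "'c set \<Rightarrow> ('c \<Rightarrow> 'c \<Rightarrow> real) \<Rightarrow> ('c \<Rightarrow> ennreal) \<Rightarrow> 'c \<Rightarrow> (real \<Rightarrow> 'c) \<Rightarrow> bool" where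
  "grad_flow S d E u U \<longleftrightarrow>
     u \<in> S \<and> (\<forall>\<epsilon>>0. \<exists>v\<in>S. E v < \<infinity> \<and> d u v < \<epsilon>) \<and>
     U 0 = u \<and> (\<forall>t\<ge>0. U t \<in> S) \<and> loc_abs_cont d U \<and>
     ((\<lambda>t. d (U t) u) \<longlongrightarrow> 0) (at_right 0) \<and>
     (\<forall>w\<in>S. AE t in lborel. t > 0 \<longrightarrow>
        (\<exists>D. ((\<lambda>s. (d (U s) w)\<^sup>2 / 2) has_real_derivative D) (at t) \<and>
             (E w < \<infinity> \<longrightarrow> E (U t) < \<infinity> \<and> D + enn2real (E (U t)) \<le> enn2real (E w))))"

end

theory Submission
  imports Defs
begin

lemma geo_univ: "geodesic_in S g x y \<Longrightarrow> geodesic_in UNIV g x y"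
  unfolding geodesic_in_def by auto

lemma geo_dist0: "geodesic_in S g x y \<Longrightarrow> t \<in> {0..1} \<Longrightarrow> dist x (g t) = t * dist x y"
  unfolding geodesic_in_def
  by (metis abs_of_nonneg atLeastAtMost_iff diff_0 abs_minus_cancel order_refl zero_le_one)

lemma geo_dist1: "geodesic_in S g x y \<Longrightarrow> t \<in> {0..1} \<Longrightarrow> dist y (g t) = (1 - t) * dist x y"
  unfolding geodesic_in_def
  by (smt (verit) atLeastAtMost_iff)

lemma geo_dist: "geodesic_in S g x y \<Longrightarrow> s \<in> {0..1} \<Longrightarrow> t \<in> {0..1} \<Longrightarrow> dist (g s) (g t) = \<bar>s - t\<bar> * dist x y"
  unfolding geodesic_in_def by auto

lemma stab:
  fixes x y x' y' :: "'b::metric_space"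
  assumes cat: "CAT0 (UNIV::'b::metric_space set)"
    and g: "geodesic_in UNIV g x y" and g': "geodesic_in UNIV g' x' y'" and t: "t \<in> {0..1}"
  shows "(dist (g t) (g' t))\<^sup>2 \<le> (dist x x')\<^sup>2 + (dist y y')\<^sup>2
     + 2 * (dist x x' + dist y y') * dist x' y' + (dist x x' + dist y y') * (dist x' y' + dist x y)"
proof -
  define m where "m = g' t"
  define e1 where "e1 = dist x x'"
  define e2 where "e2 = dist y y'"
  define D where "D = dist x y"
  define D' where "D' = dist x' y'"
  have t0: "0 \<le> t" "t \<le> 1" using t by auto
  have c: "(dist (g t) m)\<^sup>2 \<le> (1 - t) * (dist x m)\<^sup>2 + t * (dist y m)\<^sup>2 - t * (1 - t) * D\<^sup>2"
    using cat[unfolded CAT0_def, THEN conjunct2, THEN conjunct2, rule_format, of g x y m t] g t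
    unfolding D_def by simp
  have h1: "dist x m \<le> e1 + t * D'"
    using dist_triangle[of x m x'] geo_dist0[OF g' t] unfolding m_def e1_def D'_def by simp
  have h2: "dist y m \<le> e2 + (1 - t) * D'"
    using dist_triangle[of y m y'] geo_dist1[OF g' t] unfolding m_def e2_def D'_def by simp
  have s1: "(dist x m)\<^sup>2 \<le> (e1 + t * D')\<^sup>2"
    using h1 by (simp add: power_mono)
  have s2: "(dist y m)\<^sup>2 \<le> (e2 + (1 - t) * D')\<^sup>2"
    using h2 by (simp add: power_mono)
  have c2: "(dist (g t) m)\<^sup>2 \<le> (1 - t) * (e1 + t * D')\<^sup>2 + t * (e2 + (1 - t) * D')\<^sup>2 - t * (1 - t) * D\<^sup>2"
    using c mult_left_mono[OF s1, of "1 - t"] mult_left_mono[OF s2, of t] t0 by linarith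
  have eq: "(1 - t) * (e1 + t * D')\<^sup>2 + t * (e2 + (1 - t) * D')\<^sup>2 - t * (1 - t) * D\<^sup>2
     = (1 - t) * e1\<^sup>2 + t * e2\<^sup>2 + 2 * (t * (1 - t)) * (e1 + e2) * D' + (t * (1 - t)) * (D'\<^sup>2 - D\<^sup>2)"
    by (simp add: power2_eq_square algebra_simps)
  have nn: "0 \<le> e1" "0 \<le> e2" "0 \<le> D" "0 \<le> D'" unfolding e1_def e2_def D_def D'_def by auto
  have tt: "0 \<le> t * (1 - t)" "t * (1 - t) \<le> 1" using t0 by (auto simp: mult_le_one)
  have dd: "D' \<le> D + e1 + e2"
    using dist_triangle[of x' y' x] dist_triangle[of x y' y] unfolding D_def D'_def e1_def e2_def
    by (simp add: dist_commute)
  have q1: "(t * (1 - t)) * (D'\<^sup>2 - D\<^sup>2) \<le> (e1 + e2) * (D' + D)"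
  proof (cases "D' \<le> D")
    case True
    then have "D'\<^sup>2 - D\<^sup>2 \<le> 0" using nn by (simp add: power_mono)
    then have "(t * (1 - t)) * (D'\<^sup>2 - D\<^sup>2) \<le> 0" using tt mult_nonneg_nonpos by blast
    moreover have "0 \<le> (e1 + e2) * (D' + D)" using nn by simp
    ultimately show ?thesis by linarith
  next
    case False
    have "D'\<^sup>2 - D\<^sup>2 = (D' - D) * (D' + D)" by (simp add: power2_eq_square algebra_simps)
    also have "\<dots> \<le> (e1 + e2) * (D' + D)" using dd nn by (intro mult_right_mono) auto
    finally have a: "D'\<^sup>2 - D\<^sup>2 \<le> (e1 + e2) * (D' + D)" .
    have "0 \<le> D'\<^sup>2 - D\<^sup>2" using False nn by (simp add: power_mono)
    then have "(t * (1 - t)) * (D'\<^sup>2 - D\<^sup>2) \<le> D'\<^sup>2 - D\<^sup>2" using tt mult_left_le_one_le by blast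
    then show ?thesis using a by linarith
  qed
  have q2: "2 * (t * (1 - t)) * (e1 + e2) * D' \<le> 2 * (e1 + e2) * D'"
  proof -
    have "(t * (1 - t)) * (2 * (e1 + e2) * D') \<le> 2 * (e1 + e2) * D'"
      using tt nn by (intro mult_left_le_one_le) auto
    then show ?thesis by (simp add: algebra_simps)
  qed
  have q3: "(1 - t) * e1\<^sup>2 \<le> e1\<^sup>2" "t * e2\<^sup>2 \<le> e2\<^sup>2"
    using t0 by (auto intro: mult_left_le_one_le)
  show ?thesis using c2 eq q1 q2 q3 unfolding m_def e1_def e2_def D_def D'_def by linarith
qed

definition geo :: "'b::metric_space \<Rightarrow> 'b \<Rightarrow> real \<Rightarrow> 'b" where
  "geo x y = (SOME g. geodesic_in UNIV g x y)"

lemma geo_geod: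
  fixes x y :: "'b::metric_space"
  assumes "CAT0 (UNIV::'b set)"
  shows "geodesic_in UNIV (geo x y) x y"
proof -
  have "\<exists>g. geodesic_in UNIV g x y" using assms unfolding CAT0_def by blast
  then show ?thesis unfolding geo_def by (rule someI_ex)
qed

primrec hseq :: "'b::metric_space set \<Rightarrow> nat \<Rightarrow> 'b set" where
  "hseq C 0 = C"
| "hseq C (Suc n) = hseq C n \<union> (\<lambda>(x,y,q). geo x y q) ` (hseq C n \<times> hseq C n \<times> (\<rat> \<inter> {0..1}))"

lemma hseq_countable: "countable C \<Longrightarrow> countable (hseq C n)"
  by (induction n) (auto intro!: countable_SIGMA countable_Int1 countable_rat)

lemma hseq_mono: "m \<le> n \<Longrightarrow> hseq C m \<subseteq> hseq C n"
  by (induction n rule: dec_induct) auto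

lemma hseq_closed:
  assumes "x \<in> (\<Union>n. hseq C n)" "y \<in> (\<Union>n. hseq C n)" "q \<in> \<rat>" "q \<in> {0..1}"
  shows "geo x y q \<in> (\<Union>n. hseq C n)"
proof -
  obtain m k where m: "x \<in> hseq C m" and k: "y \<in> hseq C k" using assms by auto
  have "x \<in> hseq C (max m k)" "y \<in> hseq C (max m k)"
    using m k hseq_mono[of m "max m k" C] hseq_mono[of k "max m k" C] by auto
  then have "geo x y q \<in> hseq C (Suc (max m k))" using assms by force
  then show ?thesis by blast
qed

lemma key:
  fixes D :: "'b::metric_space set"
  assumes cat: "CAT0 (UNIV::'b set)"
    and Dcl: "\<And>x y q. x \<in> D \<Longrightarrow> y \<in> D \<Longrightarrow> q \<in> \<rat> \<Longrightarrow> q \<in> {0..1} \<Longrightarrow> geo x y q \<in> D"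
    and x: "x \<in> closure D" and y: "y \<in> closure D"
    and g: "geodesic_in UNIV g x y" and t: "t \<in> {0..1}"
  shows "g t \<in> closure D"
  unfolding closure_approachable
proof (intro allI impI)
  fix e :: real assume e: "0 < e"
  define DD where "DD = dist x y"
  have DD0: "0 \<le> DD" unfolding DD_def by simp
  define \<eta> where "\<eta> = min 1 ((e / 4)\<^sup>2 / (14 + 8 * DD))"
  have eta0: "0 < \<eta>" unfolding \<eta>_def using e DD0 by auto
  have eta1: "\<eta> \<le> 1" unfolding \<eta>_def by auto
  have eta2: "\<eta> * (14 + 8 * DD) \<le> (e / 4)\<^sup>2"
  proof -
    have "\<eta> \<le> (e / 4)\<^sup>2 / (14 + 8 * DD)" unfolding \<eta>_def by auto
    then show ?thesis using DD0 by (simp add: pos_le_divide_eq)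
  qed
  obtain x' where x': "x' \<in> D" "dist x x' < \<eta>" using closure_approachableD[OF x eta0] by blast
  obtain y' where y': "y' \<in> D" "dist y y' < \<eta>" using closure_approachableD[OF y eta0] by blast
  define g' where "g' = geo x' y'"
  have g': "geodesic_in UNIV g' x' y'" unfolding g'_def using geo_geod[OF cat] .
  define D' where "D' = dist x' y'"
  have D'le: "D' \<le> DD + 2 * \<eta>"
    using dist_triangle[of x' y' x] dist_triangle[of x y' y] x' y' unfolding D'_def DD_def
    by (simp add: dist_commute)
  have D'0: "0 \<le> D'" unfolding D'_def by simp
  have st: "(dist (g t) (g' t))\<^sup>2 \<le> (dist x x')\<^sup>2 + (dist y y')\<^sup>2
     + 2 * (dist x x' + dist y y') * D' + (dist x x' + dist y y') * (D' + DD)"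
    using stab[OF cat g g' t] unfolding D'_def DD_def .
  have a1: "(dist x x')\<^sup>2 \<le> \<eta>\<^sup>2" "(dist y y')\<^sup>2 \<le> \<eta>\<^sup>2"
    using x' y' by (auto intro!: power_mono)
  have a2: "(dist x x' + dist y y') * D' \<le> (2 * \<eta>) * (DD + 2 * \<eta>)"
    using x' y' D'le D'0 eta0 by (intro mult_mono) auto
  have a3: "(dist x x' + dist y y') * (D' + DD) \<le> (2 * \<eta>) * (2 * DD + 2 * \<eta>)"
    using x' y' D'le D'0 DD0 eta0 by (intro mult_mono) auto
  have "(dist (g t) (g' t))\<^sup>2 \<le> 2 * \<eta>\<^sup>2 + 4 * \<eta> * (DD + 2 * \<eta>) + 2 * \<eta> * (2 * DD + 2 * \<eta>)"
    using st a1 a2 a3 by linarith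
  also have "\<dots> = \<eta> * (14 * \<eta> + 8 * DD)" by (simp add: power2_eq_square algebra_simps)
  also have "\<dots> \<le> \<eta> * (14 + 8 * DD)" using eta0 eta1 by (intro mult_left_mono) auto
  also have "\<dots> \<le> (e / 4)\<^sup>2" by (rule eta2)
  finally have b1: "dist (g t) (g' t) \<le> e / 4"
    using e by (meson power2_le_imp_le less_imp_le divide_pos_pos zero_less_numeral)
  define \<delta> where "\<delta> = (e / 4) / (DD + 3)"
  have del: "0 < \<delta>" unfolding \<delta>_def using e DD0 by auto
  obtain q where q: "q \<in> \<rat>" "q \<in> {0..1}" "\<bar>t - q\<bar> < \<delta>"
  proof (cases "t = 0")
    case True then show ?thesis using that[of 0] del by auto
  next
    case False
    then have "max 0 (t - \<delta>) < t" using t del by auto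
    then obtain r where "r \<in> \<rat>" "max 0 (t - \<delta>) < r" "r < t" using Rats_dense_in_real by blast
    then show ?thesis using that[of r] t by auto
  qed
  have gq: "g' q \<in> D" unfolding g'_def using Dcl[OF x'(1) y'(1) q(1) q(2)] .
  have "dist (g' t) (g' q) = \<bar>t - q\<bar> * D'" using geo_dist[OF g' t q(2)] unfolding D'_def .
  also have "\<dots> \<le> \<delta> * (DD + 3)"
    using q(3) D'le eta1 D'0 by (intro mult_mono) auto
  also have "\<dots> = e / 4" unfolding \<delta>_def using DD0 by (simp add: field_simps)
  finally have b2: "dist (g' t) (g' q) \<le> e / 4" .
  have "dist (g' q) (g t) \<le> dist (g' q) (g' t) + dist (g' t) (g t)" by (rule dist_triangle)
  also have "\<dots> \<le> e / 4 + e / 4" using b1 b2 by (simp add: dist_commute)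
  finally have "dist (g' q) (g t) < e" using e by simp
  then show "\<exists>y\<in>D. dist y (g t) < e" using gq by blast
qed

lemma hull:
  fixes C :: "'b::metric_space set"
  assumes cat: "CAT0 (UNIV::'b set)" and C: "countable C"
  shows "\<exists>Y. separable_set Y \<and> CAT0 Y \<and> C \<subseteq> Y \<and> closed Y"
proof -
  define D where "D = (\<Union>n. hseq C n)"
  have cD: "countable D" unfolding D_def using hseq_countable[OF C] by auto
  have CD: "C \<subseteq> D" unfolding D_def using hseq.simps(1)[of C] by blast
  have Dcl: "\<And>x y q. x \<in> D \<Longrightarrow> y \<in> D \<Longrightarrow> q \<in> \<rat> \<Longrightarrow> q \<in> {0..1} \<Longrightarrow> geo x y q \<in> D"
    unfolding D_def by (rule hseq_closed)
  define Y where "Y = closure D"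
  have sep: "separable_set Y" unfolding separable_set_def Y_def using cD closure_subset by blast
  have c1: "\<forall>f. (\<forall>n. f n \<in> Y) \<and> Cauchy f \<longrightarrow> (\<exists>l\<in>Y. f \<longlonglongrightarrow> l)"
  proof (intro allI impI)
    fix f :: "nat \<Rightarrow> 'b" assume f: "(\<forall>n. f n \<in> Y) \<and> Cauchy f"
    then obtain l where l: "f \<longlonglongrightarrow> l" using cat unfolding CAT0_def by blast
    have "l \<in> Y" using closed_sequentially[of Y f l] f l unfolding Y_def by auto
    then show "\<exists>l\<in>Y. f \<longlonglongrightarrow> l" using l by blast
  qed
  have c2: "\<forall>x\<in>Y. \<forall>y\<in>Y. \<exists>\<gamma>. geodesic_in Y \<gamma> x y"
  proof (intro ballI)
    fix x y assume x: "x \<in> Y" and y: "y \<in> Y"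
    have g: "geodesic_in UNIV (geo x y) x y" by (rule geo_geod[OF cat])
    have "\<forall>t\<in>{0..1}. geo x y t \<in> Y"
      using key[OF cat Dcl x[unfolded Y_def] y[unfolded Y_def] g] unfolding Y_def by blast
    then have "geodesic_in Y (geo x y) x y" using g unfolding geodesic_in_def by blast
    then show "\<exists>\<gamma>. geodesic_in Y \<gamma> x y" by blast
  qed
  have c3: "\<forall>\<gamma> x y a. geodesic_in Y \<gamma> x y \<and> a \<in> Y \<longrightarrow>
        (\<forall>t\<in>{0..1}. (dist (\<gamma> t) a)\<^sup>2 \<le> (1 - t) * (dist x a)\<^sup>2 + t * (dist y a)\<^sup>2
                                      - t * (1 - t) * (dist x y)\<^sup>2)"
  proof (intro allI impI)
    fix \<gamma> x y a assume "geodesic_in Y \<gamma> x y \<and> a \<in> Y"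
    then have "geodesic_in UNIV \<gamma> x y" using geo_univ by blast
    then show "\<forall>t\<in>{0..1}. (dist (\<gamma> t) a)\<^sup>2 \<le> (1 - t) * (dist x a)\<^sup>2 + t * (dist y a)\<^sup>2
                                      - t * (1 - t) * (dist x y)\<^sup>2"
      using cat[unfolded CAT0_def, THEN conjunct2, THEN conjunct2, rule_format, of \<gamma> x y a] by simp
  qed
  have "CAT0 Y" unfolding CAT0_def using c1 c2 c3 by blast
  moreover have "C \<subseteq> Y" unfolding Y_def using CD closure_subset by blast
  moreover have "closed Y" unfolding Y_def by simp
  ultimately show ?thesis using sep by blast
qed

lemma dist_sq_bound:
  fixes a b y :: "'b::metric_space"
  shows "(dist a b)\<^sup>2 \<le> 2 * (dist a y)\<^sup>2 + 2 * (dist b y)\<^sup>2"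
proof -
  have "dist a b \<le> dist a y + dist b y" by (metis dist_commute dist_triangle)
  then have "(dist a b)\<^sup>2 \<le> (dist a y + dist b y)\<^sup>2" by (simp add: power_mono)
  also have "\<dots> \<le> 2 * (dist a y)\<^sup>2 + 2 * (dist b y)\<^sup>2"
    using sum_squares_bound[of "dist a y" "dist b y"]
    by (simp add: power2_eq_square algebra_simps)
  finally show ?thesis .
qed

lemma L2fin:
  fixes M :: "'a::metric_space measure" and ybar :: "'b::metric_space"
  assumes Om: "\<Omega> \<in> sets M" and v: "v \<in> L2Y M \<Omega> ybar" and w: "w \<in> L2Y M \<Omega> ybar"
  shows "(\<integral>\<^sup>+x\<in>\<Omega>. ennreal ((dist (v x) (w x))\<^sup>2) \<partial>M) < \<infinity>"
proof -
  let ?N = "restrict_space M \<Omega>"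
  have Om': "\<Omega> \<inter> space M \<in> sets M" using Om by auto
  have vm: "v \<in> borel_measurable ?N" and wm: "w \<in> borel_measurable ?N"
    using v w unfolding L2Y_def by auto
  have dv[measurable]: "(\<lambda>x. dist (v x) ybar) \<in> borel_measurable ?N"
    by (rule borel_measurable_continuous_on[OF _ vm]) (intro continuous_intros)
  have dw[measurable]: "(\<lambda>x. dist (w x) ybar) \<in> borel_measurable ?N"
    by (rule borel_measurable_continuous_on[OF _ wm]) (intro continuous_intros)
  have mv: "(\<lambda>x. ennreal ((dist (v x) ybar)\<^sup>2)) \<in> borel_measurable ?N"
    by measurable
  have mw: "(\<lambda>x. ennreal ((dist (w x) ybar)\<^sup>2)) \<in> borel_measurable ?N"
    by measurable
  have fv: "(\<integral>\<^sup>+x. ennreal ((dist (v x) ybar)\<^sup>2) \<partial>?N) < \<infinity>"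
    using v unfolding L2Y_def nn_integral_restrict_space[OF Om'] by auto
  have fw: "(\<integral>\<^sup>+x. ennreal ((dist (w x) ybar)\<^sup>2) \<partial>?N) < \<infinity>"
    using w unfolding L2Y_def nn_integral_restrict_space[OF Om'] by auto
  have "(\<integral>\<^sup>+x. ennreal ((dist (v x) (w x))\<^sup>2) \<partial>?N)
      \<le> (\<integral>\<^sup>+x. 2 * ennreal ((dist (v x) ybar)\<^sup>2) + 2 * ennreal ((dist (w x) ybar)\<^sup>2) \<partial>?N)"
  proof (rule nn_integral_mono)
    fix x
    have "ennreal ((dist (v x) (w x))\<^sup>2) \<le> ennreal (2 * (dist (v x) ybar)\<^sup>2 + 2 * (dist (w x) ybar)\<^sup>2)"
      using dist_sq_bound by (rule ennreal_leI)
    also have "\<dots> = 2 * ennreal ((dist (v x) ybar)\<^sup>2) + 2 * ennreal ((dist (w x) ybar)\<^sup>2)"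
      by (simp add: ennreal_plus ennreal_mult)
    finally show "ennreal ((dist (v x) (w x))\<^sup>2) \<le> 2 * ennreal ((dist (v x) ybar)\<^sup>2) + 2 * ennreal ((dist (w x) ybar)\<^sup>2)" .
  qed
  also have "\<dots> = 2 * (\<integral>\<^sup>+x. ennreal ((dist (v x) ybar)\<^sup>2) \<partial>?N) + 2 * (\<integral>\<^sup>+x. ennreal ((dist (w x) ybar)\<^sup>2) \<partial>?N)"
    using mv mw by (simp add: nn_integral_add nn_integral_cmult)
  also have "\<dots> < \<infinity>" using fv fw by (simp add: ennreal_mult_less_top)
  finally show ?thesis unfolding nn_integral_restrict_space[OF Om'] .
qed

lemma main:
  fixes M :: "'a::metric_space measure" and ybar :: "'b::metric_space" and U :: "real \<Rightarrow> 'a \<Rightarrow> 'b"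
  assumes cat: "CAT0 (UNIV::'b set)" and Om: "\<Omega> \<in> sets M"
    and gf: "grad_flow (L2Y M \<Omega> ybar) (dL2 M \<Omega>) E u U"
  shows "\<exists>Yt. separable_set Yt \<and> CAT0 Yt \<and> (\<forall>t\<ge>0. AE x in M. x \<in> \<Omega> \<longrightarrow> U t x \<in> Yt)"
proof -
  let ?N = "restrict_space M \<Omega>"
  have Om': "\<Omega> \<inter> space M \<in> sets M" using Om by auto
  have UL: "\<And>t. t \<ge> 0 \<Longrightarrow> U t \<in> L2Y M \<Omega> ybar" using gf unfolding grad_flow_def by auto
  have lac: "loc_abs_cont (dL2 M \<Omega>) U" using gf unfolding grad_flow_def by auto
  have "\<forall>t. \<exists>Z C. t \<ge> 0 \<longrightarrow> (Z \<in> null_sets M \<and> countable C \<and> U t ` (\<Omega> - Z) \<subseteq> closure C)"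
  proof
    fix t :: real
    show "\<exists>Z C. t \<ge> 0 \<longrightarrow> (Z \<in> null_sets M \<and> countable C \<and> U t ` (\<Omega> - Z) \<subseteq> closure C)"
    proof (cases "t \<ge> 0")
      case True
      then obtain Z where "Z \<in> null_sets M" "separable_set (U t ` (\<Omega> - Z))"
        using UL[OF True] unfolding L2Y_def by auto
      then show ?thesis unfolding separable_set_def by blast
    qed auto
  qed
  then obtain Z Cf where ZC: "\<And>t. t \<ge> 0 \<Longrightarrow> Z t \<in> null_sets M \<and> countable (Cf t) \<and> U t ` (\<Omega> - Z t) \<subseteq> closure (Cf t)"
    by metis
  define C where "C = insert ybar (\<Union>q\<in>\<rat> \<inter> {0..}. Cf q)"
  have cC: "countable C" unfolding C_def using ZC by (auto intro!: countable_UN countable_Int1 countable_rat)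
  obtain Y where Y: "separable_set Y" "CAT0 Y" "C \<subseteq> Y" "closed Y" using hull[OF cat cC] by blast
  have Yne: "Y \<noteq> {}" using Y(3) unfolding C_def by auto
  have rat: "AE x in M. x \<in> \<Omega> \<longrightarrow> U q x \<in> Y" if q: "q \<in> \<rat>" "q \<ge> 0" for q
  proof (rule AE_I'[of "Z q"])
    show "Z q \<in> null_sets M" using ZC[OF q(2)] by blast
    have "closure (Cf q) \<subseteq> Y" using Y(3,4) q unfolding C_def by (intro closure_minimal) auto
    then show "{x \<in> space M. \<not> (x \<in> \<Omega> \<longrightarrow> U q x \<in> Y)} \<subseteq> Z q" using ZC[OF q(2)] by blast
  qed
  have "AE x in M. x \<in> \<Omega> \<longrightarrow> U t x \<in> Y" if t0: "t \<ge> 0" for t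
  proof (cases "t \<in> \<rat>")
    case True then show ?thesis using rat t0 by blast
  next
    case False
    then have tpos: "t > 0" using t0 by (cases "t = 0") auto
    obtain g where g: "\<forall>s. 0 \<le> g s" "g integrable_on {t/2..t+1}"
      "\<forall>s r. t/2 \<le> s \<and> s \<le> r \<and> r \<le> t+1 \<longrightarrow> dL2 M \<Omega> (U s) (U r) \<le> integral {s..r} g"
      using lac[unfolded loc_abs_cont_def, rule_format, of "t/2" "t+1"] tpos by auto
    have gi: "g integrable_on {t/2..t}" using g(2) by (rule integrable_on_subinterval) auto
    have cont: "continuous_on {t/2..t} (\<lambda>s. integral {s..t} g)"
      by (rule indefinite_integral_continuous_1'[OF gi])
    define h where "h x = infdist (U t x) Y" for x
    have Utm: "U t \<in> borel_measurable ?N" using UL[OF t0] unfolding L2Y_def by auto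
    have hm[measurable]: "h \<in> borel_measurable ?N"
      unfolding h_def by (rule borel_measurable_continuous_on[OF _ Utm]) (intro continuous_intros)
    have hm2: "(\<lambda>x. ennreal ((h x)\<^sup>2)) \<in> borel_measurable ?N" by measurable
    have bnd: "(\<integral>\<^sup>+x. ennreal ((h x)\<^sup>2) \<partial>?N) \<le> ennreal ((integral {q..t} g)\<^sup>2)"
      if q: "q \<in> \<rat>" "t/2 \<le> q" "q \<le> t" for q
    proof -
      have q0: "q \<ge> 0" using q tpos by auto
      have ae: "AE x in ?N. U q x \<in> Y"
        using rat[OF q(1) q0] by (subst AE_restrict_space_iff[OF Om'])
      have "(\<integral>\<^sup>+x. ennreal ((h x)\<^sup>2) \<partial>?N) \<le> (\<integral>\<^sup>+x. ennreal ((dist (U q x) (U t x))\<^sup>2) \<partial>?N)"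
      proof (rule nn_integral_mono_AE)
        show "AE x in ?N. ennreal ((h x)\<^sup>2) \<le> ennreal ((dist (U q x) (U t x))\<^sup>2)"
          using ae
        proof eventually_elim
          case (elim x)
          have "h x \<le> dist (U t x) (U q x)" unfolding h_def using elim by (rule infdist_le)
          moreover have "0 \<le> h x" unfolding h_def by (rule infdist_nonneg)
          ultimately show ?case by (intro ennreal_leI) (simp add: dist_commute power_mono)
        qed
      qed
      also have "\<dots> = (\<integral>\<^sup>+x\<in>\<Omega>. ennreal ((dist (U q x) (U t x))\<^sup>2) \<partial>M)"
        by (rule nn_integral_restrict_space[OF Om'])
      finally have b1: "(\<integral>\<^sup>+x. ennreal ((h x)\<^sup>2) \<partial>?N) \<le> (\<integral>\<^sup>+x\<in>\<Omega>. ennreal ((dist (U q x) (U t x))\<^sup>2) \<partial>M)" .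
      define I where "I = (\<integral>\<^sup>+x\<in>\<Omega>. ennreal ((dist (U q x) (U t x))\<^sup>2) \<partial>M)"
      have If: "I < \<infinity>" unfolding I_def using L2fin[OF Om UL[OF q0] UL[OF t0]] .
      have "dL2 M \<Omega> (U q) (U t) \<le> integral {q..t} g" using g(3) q by auto
      then have "sqrt (enn2real I) \<le> integral {q..t} g" unfolding dL2_def I_def .
      then have "enn2real I \<le> (integral {q..t} g)\<^sup>2"
        by (metis enn2real_nonneg real_sqrt_le_iff sqrt_le_D)
      then have "I \<le> ennreal ((integral {q..t} g)\<^sup>2)"
      proof -
        have "I = ennreal (enn2real I)" using If by simp
        then show ?thesis using \<open>enn2real I \<le> (integral {q..t} g)\<^sup>2\<close> ennreal_leI by metis
      qed
      then show ?thesis using b1 unfolding I_def by simp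
    qed
    have zero: "(\<integral>\<^sup>+x. ennreal ((h x)\<^sup>2) \<partial>?N) \<le> 0 + ennreal e" if e: "0 < e" for e
    proof -
      have se: "0 < sqrt e" using e by simp
      have tt: "t \<in> {t/2..t}" using tpos by auto
      obtain d where d: "d > 0" "\<forall>s\<in>{t/2..t}. dist s t < d \<longrightarrow> dist (integral {s..t} g) (integral {t..t} g) < sqrt e"
        using cont[unfolded continuous_on_iff, rule_format, OF tt se] by blast
      have "max (t/2) (t - d) < t" using tpos d by auto
      then obtain q where q: "q \<in> \<rat>" "max (t/2) (t - d) < q" "q < t" using Rats_dense_in_real by blast
      then have "dist (integral {q..t} g) 0 < sqrt e" using d by (auto simp: dist_real_def)
      then have "\<bar>integral {q..t} g\<bar> < sqrt e" by simp
      then have "(integral {q..t} g)\<^sup>2 < e"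
        using e by (metis abs_ge_zero abs_power2 real_sqrt_abs real_sqrt_less_iff power2_abs)
      then have "ennreal ((integral {q..t} g)\<^sup>2) \<le> ennreal e" by (intro ennreal_leI) simp
      then show ?thesis using bnd[of q] q by simp
    qed
    have "(\<integral>\<^sup>+x. ennreal ((h x)\<^sup>2) \<partial>?N) \<le> 0"
      by (rule ennreal_le_epsilon) (rule zero)
    then have "(\<integral>\<^sup>+x. ennreal ((h x)\<^sup>2) \<partial>?N) = 0" by simp
    then have "AE x in ?N. ennreal ((h x)\<^sup>2) = 0" using nn_integral_0_iff_AE[OF hm2] by simp
    then have "AE x in ?N. U t x \<in> Y"
    proof eventually_elim
      case (elim x)
      then have "h x = 0" by simp
      then have "U t x \<in> closure Y" unfolding h_def using in_closure_iff_infdist_zero[OF Yne] by simp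
      then show ?case using Y(4) by simp
    qed
    then show ?thesis by (subst (asm) AE_restrict_space_iff[OF Om'])
  qed
  then show ?thesis using Y(1,2) by blast
qed

theorem proposition4p21:
  fixes M :: "'a::polish_space measure" and K N :: real
    and ybar :: "'b::metric_space" and \<Omega> :: "'a set" and ubar u :: "'a \<Rightarrow> 'b"
  assumes "RCD K N M"
    and "CAT0 (UNIV :: 'b set)"
    and "open \<Omega>"
    and "ubar \<in> KS12 M \<Omega> ybar"
    and "u \<in> L2Y M \<Omega> ybar"
  shows "(\<forall>U. grad_flow (L2Y M \<Omega> ybar) (dL2 M \<Omega>) (E_KS_bc M \<Omega> ybar ubar) u U \<longrightarrow>
            (\<exists>Yt. separable_set Yt \<and> CAT0 Yt \<and> (\<forall>t\<ge>0. AE x in M. x \<in> \<Omega> \<longrightarrow> U t x \<in> Yt)))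
       \<and> (\<forall>U. grad_flow (L2Y M \<Omega> ybar) (dL2 M \<Omega>) (E_KS M \<Omega>) u U \<longrightarrow>
            (\<exists>Yt. separable_set Yt \<and> CAT0 Yt \<and> (\<forall>t\<ge>0. AE x in M. x \<in> \<Omega> \<longrightarrow> U t x \<in> Yt)))"
proof -
  have "sets M = sets borel" using assms(1) unfolding RCD_def by blast
  then have Om: "\<Omega> \<in> sets M" using assms(3) by simp
  show ?thesis using main[OF assms(2) Om] by blast
qed

end
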